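(* Consider the saddle-point structured problem in the context under the stated assumptions. If $(\bar x,\bar y)$ is an $\varepsilon$-saddle point (for some $\varepsilon\ge0$), then $p(\bar x)-d(\bar y)\le2\varepsilon D_\phi+\frac{3\varepsilon^2}{2\mu}$.
   Context: Let $A\in\mathbb R^{m\times n}$, $f:\mathbb R^n\to\mathbb R$ convex, differentiable with $L_f$-Lipschitz gradient and $\mu$-strongly convex with $\mu>0$, and $r:\mathbb R^n\to\mathbb R\cup\{+\infty\}$, $\phi:\mathbb R^m\to\mathbb R\cup\{+\infty\}$ proper closed convex, with $\mathrm{dom}(\phi)$ bounded and $D_\phi=\max_{y_1,y_2\in\mathrm{dom}(\phi)}\|y_1-y_2\|$. Define $G=f+r$, $p(x)=G(x)+\max_y\{\langle y,Ax\rangle-\phi(y)\}$, $\varphi(y)=\min_x\{G(x)+\langle y,Ax\rangle\}$, $d(y)=\varphi(y)-\phi(y)$. Assume a saddle point $(x^*,y^* )$ exists, i.e. $0\in\partial G(x^* )+A^\top y^*$ and $0\in Ax^*-\partial\phi(y^* )$. A pair $(\bar x,\bar y)$ is an $\varepsilon$-saddle point if $\mathrm{dist}(0,\partial G(\bar x)+A^\top\bar y)\le\varepsilon$ and $\mathrm{dist}(0,A\bar x-\partial\phi(\bar y))\le\varepsilon$, where $\partial$ is the convex subdifferential and $\mathrm{dist}(0,S)=\inf_{s\in S}\|s\|$. *)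

theory Defs
  imports "HOL-Analysis.Analysis" "HOL-Library.Extended_Real"
begin

definition epigraph :: "('a \<Rightarrow> ereal) \<Rightarrow> ('a \<times> real) set" where
  "epigraph h = {(x, t). h x \<le> ereal t}"

definition edom :: "('a \<Rightarrow> ereal) \<Rightarrow> 'a set" where
  "edom h = {x. h x < \<infinity>}"

definition proper_fun :: "('a \<Rightarrow> ereal) \<Rightarrow> bool" where
  "proper_fun h \<longleftrightarrow> (\<forall>x. h x \<noteq> -\<infinity>) \<and> (\<exists>x. h x \<noteq> \<infinity>)"

definition convex_fun :: "('a::real_vector \<Rightarrow> ereal) \<Rightarrow> bool" where
  "convex_fun h \<longleftrightarrow> convex (epigraph h)"

definition closed_fun :: "('a::topological_space \<Rightarrow> ereal) \<Rightarrow> bool" where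
  "closed_fun h \<longleftrightarrow> closed (epigraph h)"

definition subdiff :: "('a::real_inner \<Rightarrow> ereal) \<Rightarrow> 'a \<Rightarrow> 'a set" where
  "subdiff h x = {g. h x \<noteq> \<infinity> \<and> h x \<noteq> -\<infinity> \<and>
                      (\<forall>z. h x + ereal (g \<bullet> (z - x)) \<le> h z)}"

text \<open>dist(0,S) = inf of norms over S, with inf over the empty set = +\<infinity>.\<close>
definition dist0 :: "('a::real_normed_vector) set \<Rightarrow> ereal" where
  "dist0 S = (INF s\<in>S. ereal (norm s))"

definition strongly_convex_on :: "real \<Rightarrow> ('a::real_normed_vector \<Rightarrow> real) \<Rightarrow> bool" where
  "strongly_convex_on \<mu> f \<longleftrightarrow> (\<forall>x y t. 0 \<le> t \<and> t \<le> 1 \<longrightarrow>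
      f (t *\<^sub>R x + (1 - t) *\<^sub>R y) \<le> t * f x + (1 - t) * f y - \<mu> / 2 * t * (1 - t) * (norm (x - y))\<^sup>2)"

definition diam_dom :: "('a::metric_space \<Rightarrow> ereal) \<Rightarrow> real" where
  "diam_dom h = (SUP p\<in>edom h \<times> edom h. dist (fst p) (snd p))"

end

theory Submission
  imports Defs
begin

lemma inner_transpose: fixes A :: "real^'n^'m"
  shows "y \<bullet> (A *v x) = (transpose A *v y) \<bullet> x"
proof -
  have "y \<bullet> (A *v x) = (\<Sum>i\<in>UNIV. \<Sum>j\<in>UNIV. y$i * (A$i$j * x$j))"
    by (simp add: inner_vec_def matrix_vector_mult_def sum_distrib_left)
  also have "\<dots> = (\<Sum>j\<in>UNIV. \<Sum>i\<in>UNIV. y$i * (A$i$j * x$j))" by (rule sum.swap)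
  also have "\<dots> = (transpose A *v y) \<bullet> x"
    by (simp add: inner_vec_def matrix_vector_mult_def transpose_def sum_distrib_left mult_ac)
  finally show ?thesis .
qed

lemma le_lim: fixes a b K :: real
  assumes K: "K \<ge> 0" and h: "\<And>t. 0<t \<Longrightarrow> t<1 \<Longrightarrow> a \<le> b + K*t" shows "a \<le> b"
proof (rule ccontr)
  assume "\<not> a \<le> b" then have gap: "a - b > 0" by simp
  define t where "t = min (1/2) ((a-b)/(2*(K+1)))"
  have t: "0<t" "t<1" using gap K by (auto simp: t_def)
  have "K*t \<le> K*((a-b)/(2*(K+1)))" using K by (intro mult_left_mono) (auto simp: t_def)
  also have "\<dots> = (a-b)/2 * (K/(K+1))" by (simp add: field_simps)
  also have "\<dots> \<le> (a-b)/2 * 1" using gap K by (intro mult_left_mono) auto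
  finally have "2*(K*t) \<le> a-b" by simp
  with h[OF t] gap show False by linarith
qed

lemma convex_fun_ineq:
  assumes "convex_fun r" "r x = ereal a" "r y = ereal b" "0\<le>t" "t\<le>1"
  shows "r (t *\<^sub>R x + (1-t) *\<^sub>R y) \<le> ereal (t*a + (1-t)*b)"
proof -
  have "(x,a) \<in> epigraph r" "(y,b) \<in> epigraph r" using assms by (auto simp: epigraph_def)
  then have "t *\<^sub>R (x,a) + (1-t) *\<^sub>R (y,b) \<in> epigraph r"
    using assms(1,4,5) unfolding convex_fun_def by (intro convexD) auto
  then show ?thesis by (simp add: epigraph_def)
qed

lemma dist_le_diam:
  fixes h :: "'a::real_normed_vector \<Rightarrow> ereal"
  assumes "bounded (edom h)" "x \<in> edom h" "y \<in> edom h"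
  shows "dist x y \<le> diam_dom h"
proof -
  obtain e where e: "\<And>z. z \<in> edom h \<Longrightarrow> norm z \<le> e" using assms(1) by (auto simp: bounded_iff)
  have "bdd_above ((\<lambda>p. dist (fst p) (snd p)) ` (edom h \<times> edom h))"
  proof (rule bdd_aboveI2)
    fix p assume "p \<in> edom h \<times> edom h"
    then have "norm (fst p) \<le> e" "norm (snd p) \<le> e" using e by auto
    then show "dist (fst p) (snd p) \<le> 2*e" using norm_triangle_ineq4[of "fst p" "snd p"]
      by (simp add: dist_norm)
  qed
  then show ?thesis unfolding diam_dom_def
    using cSUP_upper[of "(x,y)" "edom h \<times> edom h" "\<lambda>p. dist (fst p) (snd p)"] assms by auto
qed

lemma strong_sub:
  fixes f :: "'a::real_inner \<Rightarrow> real"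
  assumes fs: "strongly_convex_on \<mu> f" and mu: "\<mu> > 0" and rc: "convex_fun r" and rp: "proper_fun r"
    and g: "g \<in> subdiff (\<lambda>x. ereal (f x) + r x) xb"
  shows "ereal (f xb) + r xb + ereal (g \<bullet> (x - xb) + \<mu>/2 * (norm (x - xb))^2) \<le> ereal (f x) + r x"
proof -
  from g have gb: "ereal (f xb) + r xb \<noteq> \<infinity>" "ereal (f xb) + r xb \<noteq> -\<infinity>" and
    sg: "\<And>z. ereal (f xb) + r xb + ereal (g \<bullet> (z - xb)) \<le> ereal (f z) + r z"
    by (auto simp: subdiff_def)
  obtain rb where rb: "r xb = ereal rb" using gb by (cases "r xb") auto
  have rnm: "\<And>z. r z \<noteq> -\<infinity>" using rp by (auto simp: proper_fun_def)
  show ?thesis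
  proof (cases "r x = \<infinity>")
    case True then show ?thesis by simp
  next
    case False
    then obtain rx where rx: "r x = ereal rx" using rnm[of x] by (cases "r x") auto
    define d where "d = x - xb"
    define q where "q = \<mu>/2 * (norm d)^2"
    have q0: "q \<ge> 0" using mu by (simp add: q_def)
    have main: "f xb + rb + g \<bullet> d + q*(1-t) \<le> f x + rx" if t: "0<t" "t<1" for t
    proof -
      define z where "z = t *\<^sub>R x + (1-t) *\<^sub>R xb"
      have zd: "z - xb = t *\<^sub>R d" by (simp add: z_def d_def algebra_simps)
      have h1': "f z \<le> t * f x + (1-t) * f xb - \<mu>/2*t*(1-t)*(norm (x - xb))^2"
      proof -
        have tt: "0 \<le> t \<and> t \<le> 1" using t by simp
        show ?thesis unfolding z_def
          by (rule fs[unfolded strongly_convex_on_def, rule_format, of t x xb, OF tt])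
      qed
      have eq: "\<mu>/2*t*(1-t)*(norm (x - xb))^2 = t*(1-t)*q" by (simp add: q_def d_def)
      have h1: "f z \<le> t * f x + (1-t) * f xb - t*(1-t)*q"
        unfolding eq[symmetric] using h1' .
      have h2: "r z \<le> ereal (t*rx + (1-t)*rb)" unfolding z_def using convex_fun_ineq[OF rc rx rb] t by auto
      then obtain rz where rz: "r z = ereal rz" "rz \<le> t*rx + (1-t)*rb" using rnm[of z] by (cases "r z") auto
      have h3: "f xb + rb + t*(g \<bullet> d) \<le> f z + rz" using sg[of z] rz rb zd by simp
      have e1: "t * (f xb + rb + g \<bullet> d + q*(1-t)) = (f xb + rb + t*(g \<bullet> d)) - (1-t)*(f xb + rb) + t*(1-t)*q"
        by (simp add: algebra_simps)
      have e2: "t * (f x + rx) = (t * f x + (1-t) * f xb - t*(1-t)*q + (t*rx + (1-t)*rb)) - (1-t)*(f xb + rb) + t*(1-t)*q"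
        by (simp add: algebra_simps)
      have "t * (f xb + rb + g \<bullet> d + q*(1-t)) \<le> t * (f x + rx)"
        unfolding e1 e2 using h1 h3 rz(2) by linarith
      then show ?thesis using t by simp
    qed
    have "f xb + rb + g \<bullet> d + q \<le> f x + rx"
    proof (rule le_lim[OF q0])
      fix t :: real assume "0<t" "t<1"
      from main[OF this] show "f xb + rb + g \<bullet> d + q \<le> f x + rx + q*t"
        by (simp add: algebra_simps)
    qed
    then show ?thesis using rx rb by (simp add: d_def q_def)
  qed
qed

lemma phi_side:
  fixes \<phi> :: "'a::real_inner \<Rightarrow> ereal"
  assumes v: "v \<in> subdiff \<phi> yb" and pp: "proper_fun \<phi>" and bd: "bounded (edom \<phi>)"
  shows "ereal (y \<bullet> w) - \<phi> y \<le> ereal (yb \<bullet> w) - \<phi> yb + ereal (norm (w - v) * diam_dom \<phi>)"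
proof -
  from v have gb: "\<phi> yb \<noteq> \<infinity>" "\<phi> yb \<noteq> -\<infinity>" and
    sg: "\<And>z. \<phi> yb + ereal (v \<bullet> (z - yb)) \<le> \<phi> z" by (auto simp: subdiff_def)
  obtain b where b: "\<phi> yb = ereal b" using gb by (cases "\<phi> yb") auto
  show ?thesis
  proof (cases "\<phi> y = \<infinity>")
    case True then show ?thesis by simp
  next
    case False
    then obtain c where c: "\<phi> y = ereal c" using pp by (cases "\<phi> y") (auto simp: proper_fun_def)
    have ed: "y \<in> edom \<phi>" "yb \<in> edom \<phi>" using b c by (auto simp: edom_def)
    have s: "b + v \<bullet> (y - yb) \<le> c" using sg[of y] b c by simp
    have "(y - yb) \<bullet> (w - v) \<le> norm (y - yb) * norm (w - v)" by (rule norm_cauchy_schwarz)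
    also have "\<dots> \<le> diam_dom \<phi> * norm (w - v)"
      using dist_le_diam[OF bd ed] by (intro mult_right_mono) (auto simp: dist_norm)
    finally have cs: "(y - yb) \<bullet> (w - v) \<le> norm (w - v) * diam_dom \<phi>" by (simp add: mult.commute)
    have "y \<bullet> w - c \<le> yb \<bullet> w - b + (y - yb) \<bullet> (w - v)"
      using s by (simp add: inner_diff_left inner_diff_right inner_commute)
    with cs show ?thesis using b c by simp
  qed
qed

theorem theorem6p3:
  fixes A :: "real^'n^'m"
    and f :: "real^'n \<Rightarrow> real" and gradf :: "real^'n \<Rightarrow> real^'n"
    and r :: "real^'n \<Rightarrow> ereal" and \<phi> :: "real^'m \<Rightarrow> ereal"
    and Lf \<mu> \<epsilon> :: real and xbar :: "real^'n" and ybar :: "real^'m"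
  assumes f_convex: "convex_on UNIV f"
    and f_grad: "\<And>x. (f has_derivative (\<lambda>h. gradf x \<bullet> h)) (at x)"
    and f_lip: "\<And>x y. norm (gradf x - gradf y) \<le> Lf * norm (x - y)"
    and mu_pos: "\<mu> > 0"
    and f_strong: "strongly_convex_on \<mu> f"
    and r_proper: "proper_fun r" and r_closed: "closed_fun r" and r_convex: "convex_fun r"
    and phi_proper: "proper_fun \<phi>" and phi_closed: "closed_fun \<phi>" and phi_convex: "convex_fun \<phi>"
    and phi_bdd: "bounded (edom \<phi>)"
    and saddle: "\<exists>xs ys. - (transpose A *v ys) \<in> subdiff (\<lambda>x. ereal (f x) + r x) xs
                       \<and> A *v xs \<in> subdiff \<phi> ys"
    and eps_nonneg: "\<epsilon> \<ge> 0"
    and eps1: "dist0 {g + transpose A *v ybar | g. g \<in> subdiff (\<lambda>x. ereal (f x) + r x) xbar}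
                 \<le> ereal \<epsilon>"
    and eps2: "dist0 {A *v xbar - v | v. v \<in> subdiff \<phi> ybar} \<le> ereal \<epsilon>"
  shows "let G = (\<lambda>x. ereal (f x) + r x);
             p = (\<lambda>x. G x + (SUP y. ereal (y \<bullet> (A *v x)) - \<phi> y));
             \<phi>\<^sub>d = (\<lambda>y. INF x. G x + ereal (y \<bullet> (A *v x)));
             d = (\<lambda>y. \<phi>\<^sub>d y - \<phi> y)
         in p xbar - d ybar \<le> ereal (2 * \<epsilon> * diam_dom \<phi> + 3 * \<epsilon>\<^sup>2 / (2 * \<mu>))"
proof -
  define G where "G = (\<lambda>x. ereal (f x) + r x)"
  define S where "S = (SUP y. ereal (y \<bullet> (A *v xbar)) - \<phi> y)"
  define Q where "Q = (INF x. G x + ereal (ybar \<bullet> (A *v x)))"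
  define D where "D = diam_dom \<phi>"
  define L where "L = G xbar + S - (Q - \<phi> ybar)"
  have key: "L \<le> ereal (norm (A *v xbar - v) * D + (norm (g + transpose A *v ybar))^2/(2*\<mu>))"
    if g: "g \<in> subdiff G xbar" and v: "v \<in> subdiff \<phi> ybar" for g v
  proof -
    define \<eta> where "\<eta> = norm (g + transpose A *v ybar)"
    define \<zeta> where "\<zeta> = norm (A *v xbar - v)"
    define c where "c = ybar \<bullet> (A *v xbar)"
    obtain a where a: "G xbar = ereal a" using g by (cases "G xbar") (auto simp: subdiff_def)
    obtain b where b: "\<phi> ybar = ereal b" using v by (cases "\<phi> ybar") (auto simp: subdiff_def)
    have xside: "ereal (a + c - \<eta>^2/(2*\<mu>)) \<le> G x + ereal (ybar \<bullet> (A *v x))" for x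
    proof -
      have st: "G xbar + ereal (g \<bullet> (x - xbar) + \<mu>/2 * (norm (x - xbar))^2) \<le> G x"
        using strong_sub[OF f_strong mu_pos r_convex r_proper, of g xbar x] g by (simp add: G_def)
      show ?thesis
      proof (cases "G x")
        case (real gx)
        define n where "n = norm (x - xbar)"
        have n0: "n \<ge> 0" by (simp add: n_def)
        have st': "a + (g \<bullet> (x - xbar) + \<mu>/2 * n^2) \<le> gx" using st a real by (simp add: n_def)
        have tr: "ybar \<bullet> (A *v x) = c + (transpose A *v ybar) \<bullet> (x - xbar)"
          by (simp add: c_def inner_transpose[of ybar A] inner_diff_right)
        have "(g + transpose A *v ybar) \<bullet> (x - xbar) \<ge> - (\<eta> * n)"
          using Cauchy_Schwarz_ineq2[of "g + transpose A *v ybar" "x - xbar"]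
          unfolding \<eta>_def n_def by linarith
        moreover have "- (\<eta> * n) + \<mu>/2 * n^2 \<ge> - (\<eta>^2/(2*\<mu>))"
        proof -
          have "0 \<le> (\<mu>*n - \<eta>)^2 / (2*\<mu>)" using mu_pos by simp
          also have "\<dots> = - (\<eta> * n) + \<mu>/2 * n^2 + \<eta>^2/(2*\<mu>)"
            using mu_pos by (simp add: field_simps power2_eq_square)
          finally show ?thesis by simp
        qed
        ultimately have "a + c - \<eta>^2/(2*\<mu>) \<le> gx + ybar \<bullet> (A *v x)"
          using st' tr by (simp add: inner_add_left)
        then show ?thesis using real by simp
      qed (use st a in auto)
    qed
    have Qlo: "ereal (a + c - \<eta>^2/(2*\<mu>)) \<le> Q" unfolding Q_def by (rule INF_greatest) (rule xside)
    have Qhi: "Q \<le> ereal (a + c)" unfolding Q_def using INF_lower[of xbar UNIV "\<lambda>x. G x + ereal (ybar \<bullet> (A *v x))"] a by (simp add: c_def)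
    have Shi: "S \<le> ereal (c - b + \<zeta> * D)" unfolding S_def
    proof (rule SUP_least)
      fix y
      show "ereal (y \<bullet> (A *v xbar)) - \<phi> y \<le> ereal (c - b + \<zeta> * D)"
        using phi_side[OF v phi_proper phi_bdd, of y "A *v xbar"] b
        by (simp add: c_def \<zeta>_def D_def)
    qed
    have Slo: "ereal (c - b) \<le> S" unfolding S_def
      using SUP_upper[of ybar UNIV "\<lambda>y. ereal (y \<bullet> (A *v xbar)) - \<phi> y"] b by (simp add: c_def)
    obtain s where s: "S = ereal s" using Shi Slo by (cases S) auto
    obtain q where q: "Q = ereal q" using Qhi Qlo by (cases Q) auto
    have "a + s - (q - b) \<le> \<zeta> * D + \<eta>^2/(2*\<mu>)"
      using Shi Qlo s q by simp
    then show ?thesis unfolding L_def using a b s q by (simp add: \<eta>_def \<zeta>_def)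
  qed
  have D0: "D \<ge> 0"
  proof -
    have ne: "{A *v xbar - v | v. v \<in> subdiff \<phi> ybar} \<noteq> {}"
    proof
      assume "{A *v xbar - v | v. v \<in> subdiff \<phi> ybar} = {}"
      then have "dist0 {A *v xbar - v | v. v \<in> subdiff \<phi> ybar} = \<infinity>"
        unfolding dist0_def by (simp add: top_ereal_def)
      with eps2 show False by simp
    qed
    obtain g0 where "g0 \<in> {A *v xbar - v | v. v \<in> subdiff \<phi> ybar}"
      using ne by blast
    then obtain v where "v \<in> subdiff \<phi> ybar" by blast
    then have "ybar \<in> edom \<phi>" by (cases "\<phi> ybar") (auto simp: subdiff_def edom_def)
    from dist_le_diam[OF phi_bdd this this] show ?thesis by (simp add: D_def)
  qed
  define K where "K = D + (2*\<epsilon>+1)/(2*\<mu>)"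
  have K0: "K \<ge> 0" using D0 mu_pos eps_nonneg by (simp add: K_def)
  have Lb: "L \<le> ereal (\<epsilon> * D + \<epsilon>^2/(2*\<mu>) + K*\<delta>)" if d: "0<\<delta>" "\<delta><1" for \<delta>
  proof -
    have lt: "ereal \<epsilon> < ereal (\<epsilon>+\<delta>)" using d by simp
    have "dist0 {g + transpose A *v ybar | g. g \<in> subdiff G xbar} < ereal (\<epsilon>+\<delta>)"
      using eps1 lt unfolding G_def by order
    then obtain g where g: "g \<in> subdiff G xbar" and gn: "norm (g + transpose A *v ybar) < \<epsilon>+\<delta>"
      unfolding dist0_def INF_less_iff by auto
    have "dist0 {A *v xbar - v | v. v \<in> subdiff \<phi> ybar} < ereal (\<epsilon>+\<delta>)"
      using eps2 lt by order
    then obtain v where v: "v \<in> subdiff \<phi> ybar" and vn: "norm (A *v xbar - v) < \<epsilon>+\<delta>"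
      unfolding dist0_def INF_less_iff by auto
    have "norm (A *v xbar - v) * D \<le> (\<epsilon>+\<delta>) * D" using vn D0 by (intro mult_right_mono) auto
    moreover have "(norm (g + transpose A *v ybar))^2 \<le> (\<epsilon>+\<delta>)^2"
      using gn by (intro power_mono) auto
    then have "(norm (g + transpose A *v ybar))^2/(2*\<mu>) \<le> (\<epsilon>+\<delta>)^2/(2*\<mu>)"
      using mu_pos by (intro divide_right_mono) auto
    moreover have "(\<epsilon>+\<delta>)^2 \<le> \<epsilon>^2 + \<delta>*(2*\<epsilon>+1)"
    proof -
      have "\<delta>*\<delta> \<le> \<delta>*1" using d by (intro mult_left_mono) auto
      then show ?thesis by (simp add: power2_eq_square algebra_simps)
    qed
    then have "(\<epsilon>+\<delta>)^2/(2*\<mu>) \<le> (\<epsilon>^2 + \<delta>*(2*\<epsilon>+1))/(2*\<mu>)"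
      using mu_pos by (intro divide_right_mono) auto
    moreover have "(\<epsilon>^2 + \<delta>*(2*\<epsilon>+1))/(2*\<mu>) = \<epsilon>^2/(2*\<mu>) + \<delta>*((2*\<epsilon>+1)/(2*\<mu>))"
      using mu_pos by (simp add: field_simps)
    moreover have "(\<epsilon>+\<delta>) * D = \<epsilon> * D + \<delta> * D" by (simp add: algebra_simps)
    ultimately have "norm (A *v xbar - v) * D + (norm (g + transpose A *v ybar))^2/(2*\<mu>)
        \<le> \<epsilon> * D + \<epsilon>^2/(2*\<mu>) + K*\<delta>" unfolding K_def by (simp add: algebra_simps)
    then have "ereal (norm (A *v xbar - v) * D + (norm (g + transpose A *v ybar))^2/(2*\<mu>))
        \<le> ereal (\<epsilon> * D + \<epsilon>^2/(2*\<mu>) + K*\<delta>)" by simp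
    with key[OF g v] show ?thesis by (rule order_trans)
  qed
  have final: "L \<le> ereal (\<epsilon> * D + \<epsilon>^2/(2*\<mu>))"
  proof (cases L)
    case (real l)
    have "l \<le> \<epsilon> * D + \<epsilon>^2/(2*\<mu>)"
      by (rule le_lim[OF K0]) (use Lb real in \<open>auto simp: mult.commute\<close>)
    then show ?thesis using real by simp
  next
    case PInf
    then show ?thesis using Lb[of "1/2"] by simp
  qed simp
  moreover have "\<epsilon> * D + \<epsilon>^2/(2*\<mu>) \<le> 2 * \<epsilon> * D + 3 * \<epsilon>^2/(2*\<mu>)"
  proof -
    have "0 \<le> \<epsilon> * D" using D0 eps_nonneg by simp
    moreover have "0 \<le> \<epsilon>^2/(2*\<mu>)" using mu_pos by simp
    moreover have "3 * \<epsilon>^2/(2*\<mu>) = 3 * (\<epsilon>^2/(2*\<mu>))" by simp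
    moreover have "2 * \<epsilon> * D = 2 * (\<epsilon> * D)" by simp
    ultimately show ?thesis by linarith
  qed
  then have "ereal (\<epsilon> * D + \<epsilon>^2/(2*\<mu>)) \<le> ereal (2 * \<epsilon> * D + 3 * \<epsilon>^2/(2*\<mu>))" by simp
  ultimately have "L \<le> ereal (2 * \<epsilon> * D + 3 * \<epsilon>^2/(2*\<mu>))" by (rule order_trans)
  then show ?thesis unfolding Let_def L_def G_def S_def Q_def D_def .
qed

end
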